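(* For every $n\geq 1$, \[ \mathcal{P}_n=\left\{1^k0^{n-p-k}1^p \;\middle|\; 0\leq p\leq n-1,\ 0\leq k\leq n-p-1\right\}\cup\left\{1^n\right\}. \]
   Context: For an integer $m\geq 0$, $\mathcal{L}_m$ is the line $y=mx-m^2$, $H_m(x,y)=y-mx+m^2$, $\mathcal{H}_m^+=\{H_m>0\}$ (the side containing $(-1,1)$) and $\mathcal{H}_m^-=\{H_m<0\}$. For $n\geq 0$, the regions of the arrangement of $\mathcal{L}_0,\dots,\mathcal{L}_{n-1}$ are the connected components of $\mathbb{R}^2\setminus(\mathcal{L}_0\cup\dots\cup\mathcal{L}_{n-1})$. Each region lies, for each $i$, entirely in $\mathcal{H}_i^+$ or entirely in $\mathcal{H}_i^-$; its code is the binary word $\sigma_0\sigma_1\cdots\sigma_{n-1}$ with $\sigma_i=1$ if the region lies in $\mathcal{H}_i^+$ and $\sigma_i=0$ if it lies in $\mathcal{H}_i^-$. $\mathcal{P}_n$ is the set of codes of the regions of this arrangement. Words are concatenated; $\sigma^k$ denotes $k$ consecutive copies of the letter $\sigma$, with $\sigma^k$ the empty word for $k\leq 0$. *)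

theory Defs
  imports "HOL-Analysis.Analysis"
begin

definition H :: "nat \<Rightarrow> real \<times> real \<Rightarrow> real" where
  "H m p = snd p - real m * fst p + (real m)^2"

definition Lline :: "nat \<Rightarrow> (real \<times> real) set" where
  "Lline m = {p. H m p = 0}"

definition Hplus :: "nat \<Rightarrow> (real \<times> real) set" where
  "Hplus m = {p. H m p > 0}"

definition Hminus :: "nat \<Rightarrow> (real \<times> real) set" where
  "Hminus m = {p. H m p < 0}"

definition complement :: "nat \<Rightarrow> (real \<times> real) set" where
  "complement n = UNIV - (\<Union>i<n. Lline i)"

definition regions :: "nat \<Rightarrow> (real \<times> real) set set" where
  "regions n = {connected_component_set (complement n) x | x. x \<in> complement n}"

definition code :: "nat \<Rightarrow> (real \<times> real) set \<Rightarrow> nat list" where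
  "code n R = map (\<lambda>i. if R \<subseteq> Hplus i then 1 else 0) [0..<n]"

definition P :: "nat \<Rightarrow> nat list set" where
  "P n = code n ` regions n"

end

theory Submission
  imports Defs
begin

definition sv :: "nat \<Rightarrow> real \<times> real \<Rightarrow> nat list" where
  "sv n x = map (\<lambda>i. if H i x > 0 then 1 else 0) [0..<n]"

lemma compl_iff: "x \<in> complement n \<longleftrightarrow> (\<forall>i<n. H i x \<noteq> 0)"
  by (auto simp: complement_def Lline_def)

lemma contH: "continuous_on S (H i)"
  unfolding H_def by (intro continuous_intros)

lemma sign_const:
  assumes x: "x \<in> complement n" and i: "i < n"
  shows "(connected_component_set (complement n) x \<subseteq> Hplus i) \<longleftrightarrow> H i x > 0"
proof
  assume "connected_component_set (complement n) x \<subseteq> Hplus i"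
  moreover have "x \<in> connected_component_set (complement n) x" using x by auto
  ultimately have "x \<in> Hplus i" by blast
  thus "H i x > 0" by (simp add: Hplus_def)
next
  assume pos: "H i x > 0"
  let ?C = "connected_component_set (complement n) x"
  show "?C \<subseteq> Hplus i"
  proof
    fix y assume y: "y \<in> ?C"
    have Csub: "?C \<subseteq> complement n" by (rule connected_component_subset)
    have "connected (H i ` ?C)"
      by (rule connected_continuous_image[OF contH connected_connected_component])
    hence iv: "is_interval (H i ` ?C)" using is_interval_connected_1 by blast
    have xC: "x \<in> ?C" using x by auto
    show "y \<in> Hplus i"
    proof (rule ccontr)
      assume "y \<notin> Hplus i"
      hence "H i y \<le> 0" by (auto simp: Hplus_def)
      hence "(0::real) \<in> H i ` ?C"
        using iv xC y pos unfolding is_interval_1 by (meson imageI less_imp_le)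
      then obtain z where "z \<in> ?C" "H i z = 0" by auto
      thus False using Csub i by (auto simp: compl_iff)
    qed
  qed
qed

lemma P_eq: "P n = {sv n x | x. x \<in> complement n}"
proof -
  have "code n (connected_component_set (complement n) x) = sv n x" if "x \<in> complement n" for x
    unfolding code_def sv_def using sign_const[OF that] by (intro map_cong) auto
  hence e: "(\<lambda>x. code n (connected_component_set (complement n) x)) ` complement n = sv n ` complement n"
    by (intro image_cong) auto
  have "regions n = (\<lambda>x. connected_component_set (complement n) x) ` complement n"
    by (auto simp: regions_def)
  hence "P n = sv n ` complement n" unfolding P_def using e by (simp add: image_image)
  thus ?thesis by auto
qed

lemma block_word:
  assumes "k \<le> b" "b \<le> n"
  shows "replicate k (1::nat) @ replicate (b - k) 0 @ replicate (n - b) 1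
       = map (\<lambda>i. if k \<le> i \<and> i < b then 0 else 1) [0..<n]"
proof -
  have "[0..<n] = [0..<k] @ [k..<b] @ [b..<n]"
  proof -
    have a: "[0..<n] = [0..<k] @ [k..<n]"
      using upt_add_eq_append[of 0 k "n-k"] assms by simp
    have b: "[k..<n] = [k..<b] @ [b..<n]"
      using upt_add_eq_append[of k b "n-b"] assms by simp
    show ?thesis using a b by simp
  qed
  moreover have "map (\<lambda>i. if k \<le> i \<and> i < b then 0 else 1) [0..<k] = replicate k (1::nat)"
  proof -
    have "map (\<lambda>i. if k \<le> i \<and> i < b then 0 else 1) [0..<k] = map (\<lambda>i. 1::nat) [0..<k]"
      using assms by (intro map_cong) auto
    thus ?thesis by (simp add: map_replicate_const)
  qed
  moreover have "map (\<lambda>i. if k \<le> i \<and> i < b then 0 else 1) [k..<b] = replicate (b-k) (0::nat)"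
  proof -
    have "map (\<lambda>i. if k \<le> i \<and> i < b then 0 else 1) [k..<b] = map (\<lambda>i. 0::nat) [k..<b]"
      using assms by (intro map_cong) auto
    thus ?thesis by (simp add: map_replicate_const)
  qed
  moreover have "map (\<lambda>i. if k \<le> i \<and> i < b then 0 else 1) [b..<n] = replicate (n-b) (1::nat)"
  proof -
    have "map (\<lambda>i. if k \<le> i \<and> i < b then 0 else 1) [b..<n] = map (\<lambda>i. 1::nat) [b..<n]"
      using assms by (intro map_cong) auto
    thus ?thesis by (simp add: map_replicate_const)
  qed
  ultimately show ?thesis by simp
qed

lemma convex_neg:
  fixes a c lo i hi :: real
  assumes "lo \<le> i" "i \<le> hi" "lo^2 - a*lo + c < 0" "hi^2 - a*hi + c < 0"
  shows "i^2 - a*i + c < 0"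
proof (cases "lo = hi")
  case True thus ?thesis using assms by auto
next
  case False
  hence lt: "lo < hi" using assms by auto
  have id: "(i^2 - a*i + c)*(hi-lo) = (hi-i)*(lo^2 - a*lo + c) + (i-lo)*(hi^2 - a*hi + c) + (hi-lo)*((i-lo)*(i-hi))"
    by (simp add: algebra_simps power2_eq_square)
  have "(hi-i)*(lo^2 - a*lo + c) + (i-lo)*(hi^2 - a*hi + c) < 0"
  proof (cases "i = lo")
    case True thus ?thesis using lt assms by (simp add: mult_pos_neg)
  next
    case False
    hence "(i-lo)*(hi^2 - a*hi + c) < 0" using assms by (simp add: mult_pos_neg)
    moreover have "(hi-i)*(lo^2 - a*lo + c) \<le> 0" using assms by (simp add: mult_nonneg_nonpos)
    ultimately show ?thesis by linarith
  qed
  moreover have "(hi-lo)*((i-lo)*(i-hi)) \<le> 0"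
    using assms lt by (simp add: mult_nonneg_nonpos)
  ultimately have "(i^2 - a*i + c)*(hi-lo) < 0" using id by linarith
  thus ?thesis using lt by (simp add: mult_less_0_iff)
qed

theorem corollary19:
  fixes n :: nat
  assumes "n \<ge> 1"
  shows "P n = {replicate k 1 @ replicate (n - p - k) 0 @ replicate p 1 | p k.
                  p \<le> n - 1 \<and> k \<le> n - p - 1} \<union> {replicate n 1}"
proof -
  have R: "{replicate k (1::nat) @ replicate (n - p - k) 0 @ replicate p 1 | p k.
                  p \<le> n - 1 \<and> k \<le> n - p - 1}
      = {map (\<lambda>i. if k \<le> i \<and> i < b then 0 else 1) [0..<n] | k b. k < b \<and> b \<le> n}" (is "?A = ?B")
  proof
    show "?A \<subseteq> ?B"
    proof
      fix w assume "w \<in> ?A"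
      then obtain p k where pk: "p \<le> n - 1" "k \<le> n - p - 1"
        and w: "w = replicate k 1 @ replicate (n - p - k) 0 @ replicate p 1" by auto
      have e: "n - (n-p) = p" using pk assms by simp
      have "k \<le> n-p" using pk by simp
      note X = block_word[OF this diff_le_self, unfolded e]
      have "w = map (\<lambda>i. if k \<le> i \<and> i < n - p then 0 else 1) [0..<n]"
        unfolding w by (rule X)
      thus "w \<in> ?B" using pk assms by force
    qed
  next
    show "?B \<subseteq> ?A"
    proof
      fix w assume "w \<in> ?B"
      then obtain k b where kb: "k < b" "b \<le> n"
        and w: "w = map (\<lambda>i. if k \<le> i \<and> i < b then 0 else 1) [0..<n]" by auto
      have "w = replicate k 1 @ replicate (n - (n-b) - k) 0 @ replicate (n-b) 1"
        using block_word[of k b n] kb w by simp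
      moreover have "n - b \<le> n - 1" "k \<le> n - (n-b) - 1" using kb by auto
      ultimately show "w \<in> ?A" by blast
    qed
  qed
  have main: "{sv n x | x. x \<in> complement n} = ?B \<union> {replicate n 1}"
  proof
    show "{sv n x | x. x \<in> complement n} \<subseteq> ?B \<union> {replicate n 1}"
    proof
      fix w assume "w \<in> {sv n x | x. x \<in> complement n}"
      then obtain x where x: "x \<in> complement n" and w: "w = sv n x" by auto
      show "w \<in> ?B \<union> {replicate n 1}"
      proof (cases "\<forall>i<n. H i x > 0")
        case True
        hence "w = map (\<lambda>i. 1) [0..<n]" unfolding w sv_def by (intro map_cong) auto
        thus ?thesis by (simp add: map_replicate_const)
      next
        case False
        define Z where "Z = {i. i < n \<and> H i x < 0}"
        have Zne: "Z \<noteq> {}" using False x by (auto simp: Z_def compl_iff not_less order.order_iff_strict)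
        have Zf: "finite Z" by (auto simp: Z_def)
        define lo where "lo = Min Z"
        define hi where "hi = Max Z"
        have loZ: "lo \<in> Z" and hiZ: "hi \<in> Z" using Zne Zf lo_def hi_def by auto
        have iff: "H i x < 0 \<longleftrightarrow> lo \<le> i \<and> i < hi + 1" if "i < n" for i
        proof
          assume "H i x < 0"
          hence "i \<in> Z" using that Z_def by auto
          thus "lo \<le> i \<and> i < hi + 1" using Min_le[OF Zf] Max_ge[OF Zf] unfolding lo_def hi_def by (simp add: less_Suc_eq_le)
        next
          assume a: "lo \<le> i \<and> i < hi + 1"
          have "real i ^2 - fst x * real i + snd x < 0"
            apply (rule convex_neg[of "real lo" _ "real hi"])
            using a loZ hiZ by (auto simp: Z_def H_def algebra_simps)
          thus "H i x < 0" by (simp add: H_def algebra_simps)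
        qed
        have "w = map (\<lambda>i. if lo \<le> i \<and> i < hi + 1 then 0 else 1) [0..<n]"
          unfolding w sv_def
        proof (intro map_cong refl)
          fix i assume "i \<in> set [0..<n]"
          hence i: "i < n" by simp
          have "H i x \<noteq> 0" using x i by (simp add: compl_iff)
          thus "(if H i x > 0 then 1 else 0) = (if lo \<le> i \<and> i < hi + 1 then 0 else (1::nat))"
            using iff[OF i] by auto
        qed
        moreover have "lo < hi + 1" using Min_le[OF Zf hiZ] unfolding lo_def by simp
        moreover have "hi + 1 \<le> n" using hiZ by (simp add: Z_def)
        ultimately show ?thesis by blast
      qed
    qed
  next
    show "?B \<union> {replicate n 1} \<subseteq> {sv n x | x. x \<in> complement n}"
    proof
      fix w assume "w \<in> ?B \<union> {replicate n 1}"
      thus "w \<in> {sv n x | x. x \<in> complement n}"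
      proof
        assume "w \<in> {replicate n 1}"
        hence w: "w = replicate n 1" by simp
        have pos: "H i (0,1) > 0" for i by (simp add: H_def add_pos_nonneg)
        have "sv n (0,1) = map (\<lambda>i. 1) [0..<n]" unfolding sv_def using pos
          by (intro map_cong) auto
        hence "sv n (0,1) = w" using w by (simp add: map_replicate_const)
        moreover have "(0,1) \<in> complement n" using pos by (simp add: compl_iff) (metis less_irrefl)
        ultimately show ?thesis by blast
      next
        assume "w \<in> ?B"
        then obtain k b where kb: "k < b" "b \<le> n"
          and w: "w = map (\<lambda>i. if k \<le> i \<and> i < b then 0 else 1) [0..<n]" by auto
        define r1 where "r1 = real k - 1/2"
        define r2 where "r2 = real b - 1/2"
        define x where "x = (r1 + r2, r1 * r2)"
        have Hx: "H i x = (real i - r1) * (real i - r2)" for i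
          by (simp add: H_def x_def algebra_simps power2_eq_square)
        have sgn: "(H i x > 0 \<longleftrightarrow> \<not> (k \<le> i \<and> i < b)) \<and> H i x \<noteq> 0" for i
        proof (cases "i < k")
          case True
          hence "real i - r1 < 0" "real i - r2 < 0" using kb by (auto simp: r1_def r2_def)
          thus ?thesis using True Hx[of i] by (simp add: mult_neg_neg)
        next
          case f1: False
          show ?thesis
          proof (cases "i < b")
            case True
            hence "real i - r1 > 0" "real i - r2 < 0" using f1 by (auto simp: r1_def r2_def)
            hence "(real i - r1) * (real i - r2) < 0" by (rule mult_pos_neg)
            thus ?thesis using True f1 Hx[of i] by auto
          next
            case False
            hence "real i - r1 > 0" "real i - r2 > 0" using kb by (auto simp: r1_def r2_def)
            thus ?thesis using False Hx[of i] by simp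
          qed
        qed
        have "sv n x = w" unfolding w sv_def using sgn by (intro map_cong) auto
        moreover have "x \<in> complement n" using sgn by (simp add: compl_iff)
        ultimately show ?thesis by blast
      qed
    qed
  qed
  show ?thesis using P_eq main R by simp
qed

end
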